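(* For every $c>0$ there exists $c'>0$ such that for all $\phi\in X_G$ with $|\phi(t)|\le c$ for all $t\in[-r,0]$ and for all $t\in[-r,t_\phi)$ we have $|x^\phi(t)|\le c'$.
   Context: Constants $\beta,\mu,\gamma,a>0$. The function $g:\mathbb{R}\to(0,\infty)$ is continuously differentiable with $0<g_0:=\inf g(\mathbb{R})\le \sup g(\mathbb{R})=g_U<\infty$. The function $v:\mathbb{R}\to\mathbb{R}$ is continuously differentiable with $0<v_0\le v(x)\le v_U$ for all $x$. Fix $r>a/v_0$; $C=C([-r,0],\mathbb{R})$, $C^1=C^1([-r,0],\mathbb{R})$ with norm $|\phi|_1=\max|\phi|+\max|\phi'|$. For a function $x$ defined on an interval containing $[t-r,t]$, the segment $x_t\in C$ is $x_t(s)=x(t+s)$. For $\phi\in C$ let $\delta(\phi)$ be the unique $u\in(0,r)$ with $a=\int_{-u}^0 v(\phi(s))\,ds$. Define $G:C^1\to\mathbb{R}$ by $$G(\phi)=\beta e^{-\mu\delta(\phi)}\frac{v(\phi(0))}{v(\phi(-\delta(\phi)))}g(\phi(-\delta(\phi)))-\gamma\phi(0),$$ and $X_G=\{\phi\in C^1:\phi'(0)=G(\phi)\}$. Each $\phi\in X_G$ determines a unique maximal continuously differentiable solution $x^\phi:[-r,t_\phi)\to\mathbb{R}$, $0<t_\phi\le\infty$, of $x'(t)=G(x_t)$ for $0<t<t_\phi$, $x_0=\phi$ (every other such solution with $x_0=\phi$ is a restriction of $x^\phi$). *)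

theory Defs
  imports "HOL-Analysis.Analysis"
begin

text \<open>Elements of C = C([-r,0],R) are represented by functions real => real,
 of which only the restriction to [-r,0] matters.\<close>

definition in_C1 :: "real \<Rightarrow> (real \<Rightarrow> real) \<Rightarrow> bool" where
  "in_C1 r \<phi> \<longleftrightarrow> (\<exists>\<phi>'. continuous_on {-r..0} \<phi>' \<and>
      (\<forall>s\<in>{-r..0}. (\<phi> has_real_derivative \<phi>' s) (at s within {-r..0})))"

definition deriv0 :: "real \<Rightarrow> (real \<Rightarrow> real) \<Rightarrow> real" where
  "deriv0 r \<phi> = (THE d. (\<phi> has_real_derivative d) (at 0 within {-r..0}))"

definition delay :: "(real \<Rightarrow> real) \<Rightarrow> real \<Rightarrow> real \<Rightarrow> (real \<Rightarrow> real) \<Rightarrow> real" where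
  "delay v a r \<phi> = (THE u. u \<in> {0<..<r} \<and> integral {-u..0} (\<lambda>s. v (\<phi> s)) = a)"

definition Gfun :: "real \<Rightarrow> real \<Rightarrow> real \<Rightarrow> real \<Rightarrow> real \<Rightarrow> (real \<Rightarrow> real) \<Rightarrow> (real \<Rightarrow> real)
    \<Rightarrow> (real \<Rightarrow> real) \<Rightarrow> real" where
  "Gfun \<beta> \<mu> \<gamma> a r g v \<phi> =
     (let d = delay v a r \<phi> in
       \<beta> * exp (- \<mu> * d) * (v (\<phi> 0) / v (\<phi> (- d))) * g (\<phi> (- d)) - \<gamma> * \<phi> 0)"

definition X_G :: "real \<Rightarrow> real \<Rightarrow> real \<Rightarrow> real \<Rightarrow> real \<Rightarrow> (real \<Rightarrow> real) \<Rightarrow> (real \<Rightarrow> real)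
    \<Rightarrow> (real \<Rightarrow> real) set" where
  "X_G \<beta> \<mu> \<gamma> a r g v = {\<phi>. in_C1 r \<phi> \<and> deriv0 r \<phi> = Gfun \<beta> \<mu> \<gamma> a r g v \<phi>}"

definition seg :: "(real \<Rightarrow> real) \<Rightarrow> real \<Rightarrow> (real \<Rightarrow> real)" where
  "seg x t = (\<lambda>s. x (t + s))"

definition is_solution :: "real \<Rightarrow> real \<Rightarrow> real \<Rightarrow> real \<Rightarrow> real \<Rightarrow> (real \<Rightarrow> real) \<Rightarrow> (real \<Rightarrow> real)
    \<Rightarrow> (real \<Rightarrow> real) \<Rightarrow> real \<Rightarrow> (real \<Rightarrow> real) \<Rightarrow> bool" where
  "is_solution \<beta> \<mu> \<gamma> a r g v \<phi> T x \<longleftrightarrow> 0 < T \<and>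
     (\<exists>x'. continuous_on {-r..<T} x' \<and>
        (\<forall>t\<in>{-r..<T}. (x has_real_derivative x' t) (at t within {-r..<T})) \<and>
        (\<forall>t\<in>{0<..<T}. x' t = Gfun \<beta> \<mu> \<gamma> a r g v (seg x t))) \<and>
     (\<forall>s\<in>{-r..0}. seg x 0 s = \<phi> s)"

end

theory Submission
  imports Defs
begin

lemma int_lb:
  fixes f :: "real \<Rightarrow> real"
  assumes "continuous_on {p..q} f" "\<And>s. v0 \<le> f s" "p \<le> q"
  shows "v0 * (q - p) \<le> integral {p..q} f"
proof -
  have "integral {p..q} (\<lambda>_. v0) \<le> integral {p..q} f"
    by (rule integral_le) (auto intro: integrable_continuous_interval assms)
  then show ?thesis using assms(3) by (simp add: mult.commute)
qed

lemma delay_range: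
  fixes \<phi> v :: "real \<Rightarrow> real"
  assumes phic: "continuous_on {-r..0} \<phi>" and vc: "continuous_on UNIV v" and "0<v0"
    and vlb: "\<And>x. v0 \<le> v x" and "a>0" and "r > a/v0"
  shows "delay v a r \<phi> \<in> {0<..<r}"
proof -
  define f where "f = (\<lambda>s. v (\<phi> s))"
  have rpos: "r > 0" using assms by (smt (verit) divide_pos_pos)
  have ar: "a < v0 * r" using assms by (simp add: field_simps)
  have fc: "continuous_on {-r..0} f" unfolding f_def
    using continuous_on_compose2[OF vc phic] by auto
  have fcs: "continuous_on {p..q} f" if "-r \<le> p" "q \<le> 0" for p q
    using continuous_on_subset[OF fc] that by auto
  have fint: "f integrable_on {-r..0}" by (rule integrable_continuous_interval[OF fc])
  have flb: "\<And>s. v0 \<le> f s" unfolding f_def using vlb by auto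
  have Gc: "continuous_on {-r..0} (\<lambda>w. integral {w..0} f)"
    by (rule indefinite_integral_continuous_1'[OF fint])
  have G0: "integral {0..0} f = 0" by simp
  have Gr: "v0 * r \<le> integral {-r..0} f" using int_lb[OF fcs flb, of "-r" 0] rpos by simp
  obtain w where w: "-r \<le> w" "w \<le> 0" "integral {w..0} f = a"
    using IVT2'[of "\<lambda>w. integral {w..0} f" 0 a "-r", OF _ _ _ Gc] G0 Gr ar \<open>a>0\<close> rpos by auto
  have wne: "w \<noteq> 0" "w \<noteq> -r" using w G0 Gr ar \<open>a>0\<close> by auto
  have strict: "integral {-u1..0} f < integral {-u2..0} f" if "0 \<le> u1" "u1 < u2" "u2 \<le> r" for u1 u2
  proof -
    have "integral {-u2..0} f = integral {-u2..-u1} f + integral {-u1..0} f"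
      using Henstock_Kurzweil_Integration.integral_combine[where a="-u2" and c="-u1" and b=0 and f=f] that integrable_continuous_interval[OF fcs[of "-u2" 0]] by auto
    moreover have "v0 * (u2 - u1) \<le> integral {-u2..-u1} f"
      using int_lb[OF fcs flb, of "-u2" "-u1"] that by simp
    moreover have "v0 * (u2 - u1) > 0" using that \<open>0<v0\<close> by simp
    ultimately show ?thesis by linarith
  qed
  have ex1: "\<exists>!u. u \<in> {0<..<r} \<and> integral {-u..0} (\<lambda>s. v (\<phi> s)) = a"
  proof (rule ex1I[of _ "-w"])
    show "-w \<in> {0<..<r} \<and> integral {- (-w)..0} (\<lambda>s. v (\<phi> s)) = a"
      using w wne unfolding f_def by auto
  next
    fix u assume u: "u \<in> {0<..<r} \<and> integral {-u..0} (\<lambda>s. v (\<phi> s)) = a"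
    show "u = -w"
    proof (rule ccontr)
      assume "u \<noteq> -w"
      then consider "u < -w" | "-w < u" by linarith
      then show False
        using strict[of u "-w"] strict[of "-w" u] u w wne unfolding f_def by (cases; auto)
    qed
  qed
  show ?thesis unfolding delay_def using theI'[OF ex1] by blast
qed

lemma ode_bound:
  fixes x x' P :: "real \<Rightarrow> real"
  assumes gpos: "\<gamma> > 0" and t: "0 < t" "t < T" and r: "r > 0"
    and xd: "\<And>s. s \<in> {-r..<T} \<Longrightarrow> (x has_real_derivative x' s) (at s within {-r..<T})"
    and ode: "\<And>s. s \<in> {0<..<T} \<Longrightarrow> x' s = P s - \<gamma> * x s"
    and P: "\<And>s. s \<in> {0<..<T} \<Longrightarrow> 0 \<le> P s \<and> P s \<le> K"
    and x0: "\<bar>x 0\<bar> \<le> c" and M: "c \<le> M" "K / \<gamma> \<le> M"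
  shows "\<bar>x t\<bar> \<le> M"
proof -
  have xc: "continuous_on {-r..<T} x" by (rule DERIV_continuous_on[OF xd])
  have xc0: "continuous_on {0..t} x" by (rule continuous_on_subset[OF xc]) (use t r in auto)
  have xda: "(x has_real_derivative x' s) (at s)" if "0 < s" "s < t" for s
    using xd[of s] that t r at_within_interior[of s "{-r..<T}"] by auto
  define z where "z = (\<lambda>u. exp (\<gamma> * u) * (x u - M))"
  define w where "w = (\<lambda>u. exp (\<gamma> * u) * (x u + c))"
  have gM: "K \<le> \<gamma> * M" using M gpos by (simp add: field_simps)
  have "z t \<le> z 0"
  proof (rule DERIV_nonpos_imp_decreasing_open[where f=z])
    show "0 \<le> t" using t by simp
    show "continuous_on {0..t} z" unfolding z_def by (intro continuous_intros xc0)
    fix s assume s: "0 < s" "s < t"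
    have "(z has_real_derivative exp (\<gamma> * s) * \<gamma> * (x s - M) + exp (\<gamma> * s) * x' s) (at s)"
      unfolding z_def by (auto intro!: derivative_eq_intros xda s simp: algebra_simps)
    moreover have "exp (\<gamma> * s) * \<gamma> * (x s - M) + exp (\<gamma> * s) * x' s = exp (\<gamma> * s) * (P s - \<gamma> * M)"
      using s t by (subst ode) (auto simp: algebra_simps)
    moreover have "exp (\<gamma> * s) * (P s - \<gamma> * M) \<le> 0"
      using P[of s] s t gM by (simp add: mult_nonneg_nonpos)
    ultimately show "\<exists>y. (z has_real_derivative y) (at s) \<and> y \<le> 0" by metis
  qed
  then have up: "x t \<le> M" using x0 M unfolding z_def
    by (smt (verit) exp_gt_zero mult_pos_pos exp_zero mult_cancel_left1 mult_le_0_iff)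
  have "w 0 \<le> w t"
  proof (rule DERIV_nonneg_imp_increasing_open[where f=w])
    show "0 \<le> t" using t by simp
    show "continuous_on {0..t} w" unfolding w_def by (intro continuous_intros xc0)
    fix s assume s: "0 < s" "s < t"
    have "(w has_real_derivative exp (\<gamma> * s) * \<gamma> * (x s + c) + exp (\<gamma> * s) * x' s) (at s)"
      unfolding w_def by (auto intro!: derivative_eq_intros xda s simp: algebra_simps)
    moreover have "exp (\<gamma> * s) * \<gamma> * (x s + c) + exp (\<gamma> * s) * x' s = exp (\<gamma> * s) * (P s + \<gamma> * c)"
      using s t by (subst ode) (auto simp: algebra_simps)
    moreover have "exp (\<gamma> * s) * (P s + \<gamma> * c) \<ge> 0"
      using P[of s] s t gpos x0 by (intro mult_nonneg_nonneg) auto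
    ultimately show "\<exists>y. (w has_real_derivative y) (at s) \<and> y \<ge> 0" by metis
  qed
  then have lo: "- c \<le> x t" using x0 unfolding w_def
    by (smt (verit) exp_gt_zero zero_le_mult_iff exp_zero mult_cancel_left1)
  show ?thesis using up lo M by linarith
qed

theorem proposition3p1:
  fixes \<beta> \<mu> \<gamma> a r v0 vU :: real and g v g' v' :: "real \<Rightarrow> real"
  assumes "\<beta> > 0" "\<mu> > 0" "\<gamma> > 0" "a > 0"
    and "\<And>x. (g has_real_derivative g' x) (at x)" "continuous_on UNIV g'"
    and "\<And>x. g x > 0" "0 < Inf (range g)" "bdd_above (range g)"
    and "\<And>x. (v has_real_derivative v' x) (at x)" "continuous_on UNIV v'"
    and "0 < v0" "\<And>x. v0 \<le> v x" "\<And>x. v x \<le> vU"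
    and "r > a / v0"
  shows "\<forall>c>0. \<exists>c'>0. \<forall>\<phi>\<in>X_G \<beta> \<mu> \<gamma> a r g v. (\<forall>t\<in>{-r..0}. \<bar>\<phi> t\<bar> \<le> c) \<longrightarrow>
           (\<forall>T x. is_solution \<beta> \<mu> \<gamma> a r g v \<phi> T x \<longrightarrow> (\<forall>t\<in>{-r..<T}. \<bar>x t\<bar> \<le> c'))"
proof (intro allI impI)
  fix c :: real assume cpos: "c > 0"
  note A = assms
  define gU where "gU = Sup (range g)"
  have gle: "g y \<le> gU" for y unfolding gU_def by (rule cSup_upper) (use A(9) in auto)
  define K where "K = \<beta> * (vU / v0) * gU"
  define M where "M = max c (K / \<gamma>)"
  have rpos: "r > 0" using A by (smt (verit) divide_pos_pos)
  have vc: "continuous_on UNIV v"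
    using A(10) by (meson DERIV_isCont continuous_at_imp_continuous_on)
  have vpos: "v y > 0" for y using A(13)[of y] A(12) by linarith
  have vU0: "0 \<le> vU" using vpos[of 0] A(14)[of 0] by linarith
  show "\<exists>c'>0. \<forall>\<phi>\<in>X_G \<beta> \<mu> \<gamma> a r g v. (\<forall>t\<in>{-r..0}. \<bar>\<phi> t\<bar> \<le> c) \<longrightarrow>
           (\<forall>T x. is_solution \<beta> \<mu> \<gamma> a r g v \<phi> T x \<longrightarrow> (\<forall>t\<in>{-r..<T}. \<bar>x t\<bar> \<le> c'))"
  proof (rule exI[of _ M], intro conjI ballI impI allI)
    show "M > 0" using cpos unfolding M_def by simp
    fix \<phi> T x t
    assume phib: "\<forall>t\<in>{-r..0}. \<bar>\<phi> t\<bar> \<le> c" and sol: "is_solution \<beta> \<mu> \<gamma> a r g v \<phi> T x"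
      and t: "t \<in> {-r..<T}"
    obtain x' where Tpos: "0 < T" and xd: "\<And>s. s \<in> {-r..<T} \<Longrightarrow> (x has_real_derivative x' s) (at s within {-r..<T})"
      and xode: "\<And>s. s \<in> {0<..<T} \<Longrightarrow> x' s = Gfun \<beta> \<mu> \<gamma> a r g v (seg x s)"
      and init: "\<And>s. s \<in> {-r..0} \<Longrightarrow> x s = \<phi> s"
    proof -
      from sol have "0 < T" and ex: "\<exists>x'. continuous_on {-r..<T} x' \<and>
        (\<forall>t\<in>{-r..<T}. (x has_real_derivative x' t) (at t within {-r..<T})) \<and>
        (\<forall>t\<in>{0<..<T}. x' t = Gfun \<beta> \<mu> \<gamma> a r g v (seg x t))"
        and "\<forall>s\<in>{-r..0}. seg x 0 s = \<phi> s" unfolding is_solution_def by auto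
      moreover from ex obtain x' where "\<forall>t\<in>{-r..<T}. (x has_real_derivative x' t) (at t within {-r..<T})"
        "\<forall>t\<in>{0<..<T}. x' t = Gfun \<beta> \<mu> \<gamma> a r g v (seg x t)" by blast
      ultimately show ?thesis by (intro that[of x']) (auto simp: seg_def)
    qed
    have xc: "continuous_on {-r..<T} x" by (rule DERIV_continuous_on[OF xd])
    define P where "P s = \<beta> * exp (- \<mu> * delay v a r (seg x s)) * (v (seg x s 0) / v (seg x s (- delay v a r (seg x s))))
        * g (seg x s (- delay v a r (seg x s)))" for s
    have ode: "x' s = P s - \<gamma> * x s" if "s \<in> {0<..<T}" for s
      using xode[OF that] unfolding Gfun_def P_def Let_def by (simp add: seg_def)
    have Pb: "0 \<le> P s \<and> P s \<le> K" if s: "s \<in> {0<..<T}" for s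
    proof -
      have sc: "continuous_on {-r..0} (seg x s)"
      proof -
        have "continuous_on {-r..0} (\<lambda>u. x (s + u))"
          by (rule continuous_on_compose2[OF xc, where f="\<lambda>u. s + u"]) (use s in \<open>auto intro!: continuous_intros\<close>)
        then show ?thesis unfolding seg_def .
      qed
      define d where "d = delay v a r (seg x s)"
      have d: "d \<in> {0<..<r}" unfolding d_def by (rule delay_range[OF sc vc A(12) A(13) A(4) A(15)])
      define e where "e = exp (- \<mu> * d)"
      define q where "q = v (seg x s 0) / v (seg x s (- d))"
      define h where "h = g (seg x s (- d))"
      have P: "P s = \<beta> * e * q * h" unfolding P_def e_def q_def h_def d_def ..
      have e: "0 < e" "e \<le> 1" unfolding e_def using d A(2) by auto
      have q: "0 < q" "q \<le> vU / v0" unfolding q_def using vpos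
        using A(12) vU0 by (auto intro!: frac_le A(14) A(13))
      have h: "0 < h" "h \<le> gU" unfolding h_def using A(7) gle by auto
      have "\<beta> * e * q * h \<le> \<beta> * 1 * (vU / v0) * gU"
        using A(1) e q h vU0 A(12) by (intro mult_mono) auto
      moreover have "0 < \<beta> * e * q * h" using A(1) e q h by simp
      ultimately show ?thesis unfolding P K_def by simp
    qed
    have x0: "\<bar>x 0\<bar> \<le> c" using init[of 0] phib rpos by auto
    show "\<bar>x t\<bar> \<le> M"
    proof (cases "t \<le> 0")
      case True
      then have "\<bar>\<phi> t\<bar> \<le> c" using phib t by auto
      then show ?thesis using init[of t] True t unfolding M_def by auto
    next
      case False
      show ?thesis
        by (rule ode_bound[OF A(3) _ _ rpos xd ode Pb x0]) (use False t in \<open>auto simp: M_def\<close>)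
    qed
  qed
qed

end
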